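(* For every $\varepsilon>0$ and $n\in\mathbb{N}$ there exists $N\in\mathbb{N}$ such that the following holds for every $N$-partitioned hypergraph $H$ and every choice of vertices $\gamma_{ik},\gamma^1_{ik},\gamma^2_{ik}\in V_{ik}$, $i<k$, $i,k\in[N]$. For $i<j<k<\ell$ in $[N]$ let $A_{ijk\ell}\subseteq V_{jk}$ be the set of left neighbors of $\gamma_{j\ell}$ in the $(j,k,\ell)$-triad, $B_{ijk\ell}\subseteq V_{jk}$ the set of right neighbors of $\gamma_{ik}$ in the $(i,j,k)$-triad, and $X_{ijk\ell}=V_{jk}\setminus(A_{ijk\ell}\cup B_{ijk\ell})$; define $A^1_{ijk\ell},B^1_{ijk\ell},X^1_{ijk\ell}$ in the same way with $\gamma^1$ in place of $\gamma$, and $A^2_{ijk\ell},B^2_{ijk\ell},X^2_{ijk\ell}$ with $\gamma^2$ in place of $\gamma$. Then there exist an induced $n$-partitioned subhypergraph $H_0$ of $H$ with index set $I$ and reals $d_{\kappa\kappa^1\kappa^2}\in[0,1]$, indexed by $\kappa,\kappa^1,\kappa^2\in\{A,B,X\}$, such that $$\left|\frac{|\kappa_{ijk\ell}\cap(\kappa^1)^1_{ijk\ell}\cap(\kappa^2)^2_{ijk\ell}|}{|V_{jk}|}-d_{\kappa\kappa^1\kappa^2}\right|\le\varepsilon$$ for all $\kappa,\kappa^1,\kappa^2\in\{A,B,X\}$ and all $i<j<k<\ell$ in $I$ (where $\kappa_{ijk\ell}$ denotes $A_{ijk\ell}$, $B_{ijk\ell}$ or $X_{ijk\ell}$ according to $\kappa$,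 and similarly for the superscripted sets). Moreover, if for all $i<j<k<\ell$ the sets $A_{ijk\ell}$ and $B_{ijk\ell}$ are disjoint, $A^1_{ijk\ell}$ and $B^1_{ijk\ell}$ are disjoint, and $A^2_{ijk\ell}$ and $B^2_{ijk\ell}$ are disjoint, then $\sum_{\kappa,\kappa^1,\kappa^2\in\{A,B,X\}}d_{\kappa\kappa^1\kappa^2}\le 1+27\varepsilon$.
   Context: An $n$-partitioned hypergraph $H$ is a finite $3$-uniform hypergraph whose vertex set is partitioned into nonempty sets $V_{ij}$, $1\le i<j\le n$, such that every edge has, for some $1\le i<j<k\le n$, exactly one vertex in each of $V_{ij}$, $V_{ik}$, $V_{jk}$; the set of such edges is the $(i,j,k)$-triad. For $v\in V_{ik}$, a left neighbor (right neighbor) of $v$ in the $(i,j,k)$-triad is a vertex of $V_{ij}$ (of $V_{jk}$) contained together with $v$ in an edge of that triad. For $I\subseteq[n]$, the induced subhypergraph with index set $I$ is the $|I|$-partitioned hypergraph with parts $V_{ij}$, $i<j$, $i,j\in I$ (indexed by elements of $I$) and all edges of $H$ inside these parts. *)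

theory Defs
  imports Complex_Main
begin

text \<open>The vertex set of the hypergraph is the union of the parts.\<close>

definition partitioned_hg :: "nat \<Rightarrow> (nat \<Rightarrow> nat \<Rightarrow> nat set) \<Rightarrow> nat set set \<Rightarrow> bool" where
  "partitioned_hg N V E \<longleftrightarrow>
     (\<forall>i j. 1 \<le> i \<and> i < j \<and> j \<le> N \<longrightarrow> finite (V i j) \<and> V i j \<noteq> {}) \<and>
     (\<forall>i j i' j'. 1 \<le> i \<and> i < j \<and> j \<le> N \<and> 1 \<le> i' \<and> i' < j' \<and> j' \<le> N \<and> (i, j) \<noteq> (i', j')
        \<longrightarrow> V i j \<inter> V i' j' = {}) \<and>
     (\<forall>e\<in>E. \<exists>i j k. 1 \<le> i \<and> i < j \<and> j < k \<and> k \<le> N \<and>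
        (\<exists>x\<in>V i j. \<exists>y\<in>V i k. \<exists>z\<in>V j k. e = {x, y, z}))"

definition left_nbrs :: "(nat \<Rightarrow> nat \<Rightarrow> nat set) \<Rightarrow> nat set set \<Rightarrow> nat \<Rightarrow> nat \<Rightarrow> nat \<Rightarrow> nat \<Rightarrow> nat set" where
  "left_nbrs V E i j k v = {u \<in> V i j. \<exists>w \<in> V j k. {u, v, w} \<in> E}"

definition right_nbrs :: "(nat \<Rightarrow> nat \<Rightarrow> nat set) \<Rightarrow> nat set set \<Rightarrow> nat \<Rightarrow> nat \<Rightarrow> nat \<Rightarrow> nat \<Rightarrow> nat set" where
  "right_nbrs V E i j k v = {w \<in> V j k. \<exists>u \<in> V i j. {u, v, w} \<in> E}"

datatype kappa = KA | KB | KX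

definition Kappas :: "kappa set" where
  "Kappas = {KA, KB, KX}"

definition kset :: "(nat \<Rightarrow> nat \<Rightarrow> nat set) \<Rightarrow> nat set set \<Rightarrow> (nat \<Rightarrow> nat \<Rightarrow> nat) \<Rightarrow> kappa
                     \<Rightarrow> nat \<Rightarrow> nat \<Rightarrow> nat \<Rightarrow> nat \<Rightarrow> nat set" where
  "kset V E g K i j k l =
     (let A = left_nbrs V E j k l (g j l);
          B = right_nbrs V E i j k (g i k)
      in case K of KA \<Rightarrow> A | KB \<Rightarrow> B | KX \<Rightarrow> V j k - (A \<union> B))"

end

theory Submission
  imports Defs "HOL-Library.Ramsey"
begin

lemma UNIV_kappa: "(UNIV :: kappa set) = Kappas"
  unfolding Kappas_def using kappa.exhaust by blast

lemma card_Kappas: "card Kappas = 3"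
  unfolding Kappas_def by simp

lemma kset_sub: "kset V E g a i j k l \<subseteq> V j k"
  unfolding kset_def left_nbrs_def right_nbrs_def Let_def
  by (cases a) auto

lemma round_err:
  fixes r e :: real and m :: nat
  assumes "0 \<le> r" "r \<le> 1" "e > 0" "real m \<ge> 1 / e"
  shows "\<bar>r - real (nat (min (int m) \<lfloor>r * m\<rfloor>)) / real m\<bar> \<le> e"
    and "0 \<le> real (nat (min (int m) \<lfloor>r * m\<rfloor>)) / real m"
    and "real (nat (min (int m) \<lfloor>r * m\<rfloor>)) / real m \<le> 1"
proof -
  have mpos: "real m > 0" using assms(3,4) by (smt (verit) divide_pos_pos)
  have fl0: "\<lfloor>r * m\<rfloor> \<ge> 0" using assms(1) by simp
  have flm: "\<lfloor>r * m\<rfloor> \<le> int m"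
  proof -
    have "r * m \<le> m" using assms(2) mpos by simp
    then show ?thesis by (metis floor_mono floor_of_nat)
  qed
  have eq: "real (nat (min (int m) \<lfloor>r * m\<rfloor>)) = real_of_int \<lfloor>r * m\<rfloor>"
    using fl0 flm by simp
  have a: "real_of_int \<lfloor>r * m\<rfloor> \<le> r * m" by simp
  have b: "r * m < real_of_int \<lfloor>r * m\<rfloor> + 1" by linarith
  have em: "1 / real m \<le> e" using assms(3,4) mpos
    by (simp add: divide_le_eq mult.commute)
  have "r - real_of_int \<lfloor>r * m\<rfloor> / m \<ge> 0" using a mpos by (simp add: divide_le_eq)
  moreover have "r - real_of_int \<lfloor>r * m\<rfloor> / m < 1 / m"
  proof -
    have "r < (real_of_int \<lfloor>r * m\<rfloor> + 1) / m" using b mpos by (simp add: pos_less_divide_eq)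
    then show ?thesis by (simp add: add_divide_distrib)
  qed
  ultimately show "\<bar>r - real (nat (min (int m) \<lfloor>r * m\<rfloor>)) / real m\<bar> \<le> e"
    unfolding eq using em by linarith
  show "0 \<le> real (nat (min (int m) \<lfloor>r * m\<rfloor>)) / real m" by simp
  show "real (nat (min (int m) \<lfloor>r * m\<rfloor>)) / real m \<le> 1"
    unfolding eq using flm mpos by (simp add: divide_le_eq)
qed

lemma part3:
  assumes "finite T" "T \<subseteq> V" "A \<subseteq> V" "B \<subseteq> V" "A \<inter> B = {}"
  shows "card T = card (T \<inter> A) + card (T \<inter> B) + card (T \<inter> (V - (A \<union> B)))"
proof -
  have "T = (T \<inter> A) \<union> (T \<inter> B) \<union> (T \<inter> (V - (A \<union> B)))" using assms by blast
  then have "card T = card ((T \<inter> A) \<union> (T \<inter> B) \<union> (T \<inter> (V - (A \<union> B))))" by simp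
  also have "\<dots> = card ((T \<inter> A) \<union> (T \<inter> B)) + card (T \<inter> (V - (A \<union> B)))"
    by (rule card_Un_disjoint) (use assms in auto)
  also have "card ((T \<inter> A) \<union> (T \<inter> B)) = card (T \<inter> A) + card (T \<inter> B)"
    by (rule card_Un_disjoint) (use assms in auto)
  finally show ?thesis .
qed

lemma sum_kset:
  assumes "finite T" "T \<subseteq> V j k"
    and "kset V E g KA i j k l \<inter> kset V E g KB i j k l = {}"
  shows "(\<Sum>a\<in>Kappas. card (T \<inter> kset V E g a i j k l)) = card T"
proof -
  have e: "kset V E g KX i j k l = V j k - (kset V E g KA i j k l \<union> kset V E g KB i j k l)"
    unfolding kset_def Let_def by simp
  show ?thesis
    unfolding Kappas_def using part3[OF assms(1,2) kset_sub kset_sub assms(3)] e by simp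
qed

lemma small_case:
  fixes e :: real and n :: nat
  assumes "n < 4" "e > 0"
  shows "\<exists>I. I \<subseteq> {1..n} \<and> card I = n \<and>
         (\<exists>d :: kappa \<Rightarrow> kappa \<Rightarrow> kappa \<Rightarrow> real.
            (\<forall>a b c. 0 \<le> d a b c \<and> d a b c \<le> 1) \<and>
            (\<forall>a b c. \<forall>i\<in>I. \<forall>j\<in>I. \<forall>k\<in>I. \<forall>l\<in>I. i < j \<and> j < k \<and> k < l \<longrightarrow> P a b c i j k l) \<and>
            (Q \<longrightarrow> (\<Sum>a\<in>Kappas. \<Sum>b\<in>Kappas. \<Sum>c\<in>Kappas. d a b c) \<le> 1 + 27 * e))"
  using assms
  by (intro exI[of _ "{1..n}"] conjI exI[of _ "\<lambda>a b c. 0"]) auto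

lemma big_case:
  fixes e :: real and n :: nat
  assumes epos: "e > 0" and n4: "n \<ge> 4"
  shows "\<exists>N::nat.
     \<forall>V E (g :: nat \<Rightarrow> nat \<Rightarrow> nat) (g1 :: nat \<Rightarrow> nat \<Rightarrow> nat) (g2 :: nat \<Rightarrow> nat \<Rightarrow> nat).
       partitioned_hg N V E \<and>
       (\<forall>i k. 1 \<le> i \<and> i < k \<and> k \<le> N \<longrightarrow> g i k \<in> V i k \<and> g1 i k \<in> V i k \<and> g2 i k \<in> V i k)
       \<longrightarrow>
       (\<exists>I. I \<subseteq> {1..N} \<and> card I = n \<and>
         (\<exists>d :: kappa \<Rightarrow> kappa \<Rightarrow> kappa \<Rightarrow> real.
            (\<forall>a b c. 0 \<le> d a b c \<and> d a b c \<le> 1) \<and>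
            (\<forall>a b c. \<forall>i\<in>I. \<forall>j\<in>I. \<forall>k\<in>I. \<forall>l\<in>I. i < j \<and> j < k \<and> k < l \<longrightarrow>
               \<bar>real (card (kset V E g a i j k l \<inter> kset V E g1 b i j k l \<inter> kset V E g2 c i j k l))
                  / real (card (V j k)) - d a b c\<bar> \<le> e) \<and>
            ((\<forall>i j k l. 1 \<le> i \<and> i < j \<and> j < k \<and> k < l \<and> l \<le> N \<longrightarrow>
                kset V E g KA i j k l \<inter> kset V E g KB i j k l = {} \<and>
                kset V E g1 KA i j k l \<inter> kset V E g1 KB i j k l = {} \<and>
                kset V E g2 KA i j k l \<inter> kset V E g2 KB i j k l = {})
             \<longrightarrow> (\<Sum>a\<in>Kappas. \<Sum>b\<in>Kappas. \<Sum>c\<in>Kappas. d a b c) \<le> 1 + 27 * e)))"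
proof -
  define m where "m = nat \<lceil>1 / e\<rceil>"
  have mge: "real m \<ge> 1 / e" unfolding m_def by linarith
  define F where "F = PiE (UNIV :: (kappa \<times> kappa \<times> kappa) set) (\<lambda>_. {0..m})"
  have finU: "finite (UNIV :: (kappa \<times> kappa \<times> kappa) set)"
    using UNIV_kappa unfolding Kappas_def
    by (metis UNIV_Times_UNIV finite.emptyI finite.insertI finite_SigmaI)
  have finF: "finite F" unfolding F_def by (rule finite_PiE[OF finU]) simp
  obtain h where h: "bij_betw h F {0..<card F}" using ex_bij_betw_finite_nat[OF finF] by blast
  obtain N :: nat where N: "partn_lst {..<N} (replicate (card F) n) 4" using ramsey_full[of "replicate (card F) n" 4] by blast
  show ?thesis
  proof (intro exI[of _ N] allI impI)
    fix V E and g g1 g2 :: "nat \<Rightarrow> nat \<Rightarrow> nat"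
    assume hyp: "partitioned_hg N V E \<and>
       (\<forall>i k. 1 \<le> i \<and> i < k \<and> k \<le> N \<longrightarrow> g i k \<in> V i k \<and> g1 i k \<in> V i k \<and> g2 i k \<in> V i k)"
    then have hg: "partitioned_hg N V E" by blast
    define ratio where "ratio a b c i j k l =
      real (card (kset V E g a i j k l \<inter> kset V E g1 b i j k l \<inter> kset V E g2 c i j k l))
                  / real (card (V j k))" for a b c i j k l
    define rnd where "rnd (r::real) = nat (min (int m) \<lfloor>r * m\<rfloor>)" for r
    define col where "col Q = (\<lambda>(a,b,c). let xs = sorted_list_of_set Q in
        rnd (ratio a b c (xs!0) (xs!1) (xs!2) (xs!3)))" for Q
    have colF: "col Q \<in> F" for Q
      unfolding F_def col_def rnd_def by (auto simp: Let_def)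
    define f where "f Q = h (col (Suc ` Q))" for Q
    have fpi: "f \<in> nsets {..<N} 4 \<rightarrow> {..<length (replicate (card F) n)}"
      using h colF unfolding f_def bij_betw_def by auto
    obtain i0 H where i0: "i0 < length (replicate (card F) n)"
      and H: "H \<in> nsets {..<N} (replicate (card F) n ! i0)" and mono: "f ` nsets H 4 \<subseteq> {i0}"
      using partn_lstE[OF N fpi refl] by blast
    have i0F: "i0 < card F" using i0 by simp
    have Hn: "H \<in> nsets {..<N} n" using H i0 by simp
    then have Hsub: "H \<subseteq> {..<N}" and Hfin: "finite H" and Hcard: "card H = n"
      unfolding nsets_def by auto
    define c0 where "c0 = inv_into F h i0"
    have c0F: "c0 \<in> F" and hc0: "h c0 = i0"
    proof -
      have "i0 \<in> h ` F" using h i0F unfolding bij_betw_def by auto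
      then show "c0 \<in> F" "h c0 = i0" unfolding c0_def
        by (simp_all add: inv_into_into f_inv_into_f)
    qed
    define I where "I = Suc ` H"
    define d where "d a b c = real (c0 (a,b,c)) / real m" for a b c
    have Isub: "I \<subseteq> {1..N}" unfolding I_def using Hsub by auto
    have Icard: "card I = n" unfolding I_def using Hcard by (simp add: card_image)
    have rat01: "0 \<le> ratio a b c i j k l \<and> ratio a b c i j k l \<le> 1"
      if "1 \<le> j" "j < k" "k \<le> N" for a b c i j k l
    proof -
      have fin: "finite (V j k)" using hg that unfolding partitioned_hg_def by auto
      have "kset V E g a i j k l \<inter> kset V E g1 b i j k l \<inter> kset V E g2 c i j k l \<subseteq> V j k"
        using kset_sub by blast
      then have "card (kset V E g a i j k l \<inter> kset V E g1 b i j k l \<inter> kset V E g2 c i j k l)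
         \<le> card (V j k)" using fin card_mono by blast
      then show ?thesis unfolding ratio_def by (auto simp add: divide_le_eq_1)
    qed
    have key: "d a b c = real (rnd (ratio a b c i j k l)) / real m"
      if q: "i \<in> I" "j \<in> I" "k \<in> I" "l \<in> I" "i < j" "j < k" "k < l" for a b c i j k l
    proof -
      define Q where "Q = {i - 1, j - 1, k - 1, l - 1}"
      have i1: "i \<ge> 1" using q(1) unfolding I_def by auto
      have QH: "Q \<subseteq> H" using q(1-4) unfolding Q_def I_def by auto
      have Qc: "card Q = 4" unfolding Q_def using q i1 by (simp add: card_insert_if) arith
      have "Q \<in> nsets H 4" using QH Qc Hfin unfolding nsets_def by (auto intro: finite_subset)
      then have "f Q = i0" using mono by blast
      moreover have SQ: "Suc ` Q = {i, j, k, l}" unfolding Q_def using i1 q by auto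
      ultimately have "h (col {i,j,k,l}) = h c0" unfolding f_def hc0 by simp
      then have "col {i,j,k,l} = c0" using h colF c0F unfolding bij_betw_def inj_on_def by blast
      moreover have "sorted_list_of_set {i,j,k,l} = [i,j,k,l]"
        using sorted_list_of_set.idem_if_sorted_distinct[of "[i,j,k,l]"] q by simp
      ultimately show ?thesis unfolding d_def col_def by auto
    qed
    have err: "\<bar>ratio a b c i j k l - d a b c\<bar> \<le> e"
      if q: "i \<in> I" "j \<in> I" "k \<in> I" "l \<in> I" "i < j" "j < k" "k < l" for a b c i j k l
    proof -
      have "1 \<le> j" "k \<le> N" using q Isub by auto
      then have "0 \<le> ratio a b c i j k l \<and> ratio a b c i j k l \<le> 1" using rat01 q by auto
      then show ?thesis using key[OF q] round_err(1)[OF _ _ epos mge] unfolding rnd_def by auto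
    qed
    have d01: "0 \<le> d a b c \<and> d a b c \<le> 1" for a b c
    proof -
      have "c0 (a,b,c) \<le> m" using c0F unfolding F_def by auto
      moreover have "m > 0" using mge epos
        by (metis divide_pos_pos less_numeral_extra(1) linorder_not_less not_gr0 of_nat_0 order_le_less_trans)
      ultimately show ?thesis unfolding d_def by (simp add: divide_le_eq)
    qed
    show "\<exists>I. I \<subseteq> {1..N} \<and> card I = n \<and>
         (\<exists>d :: kappa \<Rightarrow> kappa \<Rightarrow> kappa \<Rightarrow> real.
            (\<forall>a b c. 0 \<le> d a b c \<and> d a b c \<le> 1) \<and>
            (\<forall>a b c. \<forall>i\<in>I. \<forall>j\<in>I. \<forall>k\<in>I. \<forall>l\<in>I. i < j \<and> j < k \<and> k < l \<longrightarrow>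
               \<bar>real (card (kset V E g a i j k l \<inter> kset V E g1 b i j k l \<inter> kset V E g2 c i j k l))
                  / real (card (V j k)) - d a b c\<bar> \<le> e) \<and>
            ((\<forall>i j k l. 1 \<le> i \<and> i < j \<and> j < k \<and> k < l \<and> l \<le> N \<longrightarrow>
                kset V E g KA i j k l \<inter> kset V E g KB i j k l = {} \<and>
                kset V E g1 KA i j k l \<inter> kset V E g1 KB i j k l = {} \<and>
                kset V E g2 KA i j k l \<inter> kset V E g2 KB i j k l = {})
             \<longrightarrow> (\<Sum>a\<in>Kappas. \<Sum>b\<in>Kappas. \<Sum>c\<in>Kappas. d a b c) \<le> 1 + 27 * e))"
    proof (intro exI[of _ I] conjI Isub Icard exI[of _ d] allI ballI impI d01)
      show "\<bar>real (card (kset V E g a i j k l \<inter> kset V E g1 b i j k l \<inter> kset V E g2 c i j k l))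
                  / real (card (V j k)) - d a b c\<bar> \<le> e"
        if "i \<in> I" "j \<in> I" "k \<in> I" "l \<in> I" "i < j \<and> j < k \<and> k < l" for a b c i j k l
        using err[of i j k l a b c] that unfolding ratio_def by blast
    next
      assume disj: "\<forall>i j k l. 1 \<le> i \<and> i < j \<and> j < k \<and> k < l \<and> l \<le> N \<longrightarrow>
                kset V E g KA i j k l \<inter> kset V E g KB i j k l = {} \<and>
                kset V E g1 KA i j k l \<inter> kset V E g1 KB i j k l = {} \<and>
                kset V E g2 KA i j k l \<inter> kset V E g2 KB i j k l = {}"
      define xs where "xs = sorted_list_of_set I"
      have Ifin: "finite I" unfolding I_def using Hfin by simp
      have xs: "strict_sorted xs" "set xs = I" "length xs = n"
        using sorted_list_of_set_unique[OF Ifin] Icard unfolding xs_def by auto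
      define i where "i = xs!0"
      define j where "j = xs!1"
      define k where "k = xs!2"
      define l where "l = xs!3"
      have q: "i \<in> I" "j \<in> I" "k \<in> I" "l \<in> I" "i < j" "j < k" "k < l"
        using xs n4 unfolding i_def j_def k_def l_def
        by (auto simp: sorted_wrt_iff_nth_less intro!: nth_mem)
      have bnd: "1 \<le> i" "l \<le> N" using q Isub by auto
      have D: "kset V E g KA i j k l \<inter> kset V E g KB i j k l = {}"
              "kset V E g1 KA i j k l \<inter> kset V E g1 KB i j k l = {}"
              "kset V E g2 KA i j k l \<inter> kset V E g2 KB i j k l = {}"
        using disj bnd q by blast+
      have finV: "finite (V j k)" and neV: "V j k \<noteq> {}"
        using hg q bnd unfolding partitioned_hg_def by auto
      have ksV: "\<And>G a. kset V E G a i j k l \<subseteq> V j k" by (rule kset_sub)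
      let ?K = "\<lambda>a. kset V E g a i j k l" and ?K1 = "\<lambda>b. kset V E g1 b i j k l"
        and ?K2 = "\<lambda>c. kset V E g2 c i j k l"
      have "(\<Sum>a\<in>Kappas. \<Sum>b\<in>Kappas. \<Sum>c\<in>Kappas. card (?K a \<inter> ?K1 b \<inter> ?K2 c))
          = (\<Sum>a\<in>Kappas. \<Sum>b\<in>Kappas. card (?K a \<inter> ?K1 b))"
        by (intro sum.cong refl sum_kset D(3))
           (use finV ksV in \<open>(blast intro: finite_subset[OF _ finV])+\<close>)
      also have "\<dots> = (\<Sum>a\<in>Kappas. card (?K a))"
        by (intro sum.cong refl sum_kset D(2))
           (use finV ksV in \<open>(blast intro: finite_subset[OF _ finV])+\<close>)
      also have "\<dots> = (\<Sum>a\<in>Kappas. card (V j k \<inter> ?K a))"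
        using kset_sub by (metis inf.absorb2)
      also have "\<dots> = card (V j k)"
        by (rule sum_kset[OF finV order.refl D(1)])
      finally have S: "(\<Sum>a\<in>Kappas. \<Sum>b\<in>Kappas. \<Sum>c\<in>Kappas. card (?K a \<inter> ?K1 b \<inter> ?K2 c))
         = card (V j k)" .
      have cpos: "real (card (V j k)) > 0" using finV neV by (simp add: card_gt_0_iff)
      have "(\<Sum>a\<in>Kappas. \<Sum>b\<in>Kappas. \<Sum>c\<in>Kappas. d a b c)
         \<le> (\<Sum>a\<in>Kappas. \<Sum>b\<in>Kappas. \<Sum>c\<in>Kappas. ratio a b c i j k l + e)"
        by (intro sum_mono) (use err[OF q] in \<open>smt (verit)\<close>)
      also have "\<dots> = (\<Sum>a\<in>Kappas. \<Sum>b\<in>Kappas. \<Sum>c\<in>Kappas. ratio a b c i j k l) + 27 * e"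
        by (simp add: sum.distrib card_Kappas)
      also have "(\<Sum>a\<in>Kappas. \<Sum>b\<in>Kappas. \<Sum>c\<in>Kappas. ratio a b c i j k l)
          = real (\<Sum>a\<in>Kappas. \<Sum>b\<in>Kappas. \<Sum>c\<in>Kappas. card (?K a \<inter> ?K1 b \<inter> ?K2 c))
            / real (card (V j k))"
        unfolding ratio_def by (simp add: sum_divide_distrib)
      also have "\<dots> = 1" using S cpos by simp
      finally show "(\<Sum>a\<in>Kappas. \<Sum>b\<in>Kappas. \<Sum>c\<in>Kappas. d a b c) \<le> 1 + 27 * e" by simp
    qed (use d01 in auto)
  qed
qed

theorem lemma6p1:
  "\<forall>(\<epsilon>::real) > 0. \<forall>n::nat. \<exists>N::nat.
     \<forall>V E (g :: nat \<Rightarrow> nat \<Rightarrow> nat) (g1 :: nat \<Rightarrow> nat \<Rightarrow> nat) (g2 :: nat \<Rightarrow> nat \<Rightarrow> nat).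
       partitioned_hg N V E \<and>
       (\<forall>i k. 1 \<le> i \<and> i < k \<and> k \<le> N \<longrightarrow> g i k \<in> V i k \<and> g1 i k \<in> V i k \<and> g2 i k \<in> V i k)
       \<longrightarrow>
       (\<exists>I. I \<subseteq> {1..N} \<and> card I = n \<and>
         (\<exists>d :: kappa \<Rightarrow> kappa \<Rightarrow> kappa \<Rightarrow> real.
            (\<forall>a b c. 0 \<le> d a b c \<and> d a b c \<le> 1) \<and>
            (\<forall>a b c. \<forall>i\<in>I. \<forall>j\<in>I. \<forall>k\<in>I. \<forall>l\<in>I. i < j \<and> j < k \<and> k < l \<longrightarrow>
               \<bar>real (card (kset V E g a i j k l \<inter> kset V E g1 b i j k l \<inter> kset V E g2 c i j k l))
                  / real (card (V j k)) - d a b c\<bar> \<le> \<epsilon>) \<and>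
            ((\<forall>i j k l. 1 \<le> i \<and> i < j \<and> j < k \<and> k < l \<and> l \<le> N \<longrightarrow>
                kset V E g KA i j k l \<inter> kset V E g KB i j k l = {} \<and>
                kset V E g1 KA i j k l \<inter> kset V E g1 KB i j k l = {} \<and>
                kset V E g2 KA i j k l \<inter> kset V E g2 KB i j k l = {})
             \<longrightarrow> (\<Sum>a\<in>Kappas. \<Sum>b\<in>Kappas. \<Sum>c\<in>Kappas. d a b c) \<le> 1 + 27 * \<epsilon>)))"
proof (intro allI impI)
  fix \<epsilon> :: real and n :: nat
  assume "\<epsilon> > 0"
  show "\<exists>N::nat.
     \<forall>V E (g :: nat \<Rightarrow> nat \<Rightarrow> nat) (g1 :: nat \<Rightarrow> nat \<Rightarrow> nat) (g2 :: nat \<Rightarrow> nat \<Rightarrow> nat).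
       partitioned_hg N V E \<and>
       (\<forall>i k. 1 \<le> i \<and> i < k \<and> k \<le> N \<longrightarrow> g i k \<in> V i k \<and> g1 i k \<in> V i k \<and> g2 i k \<in> V i k)
       \<longrightarrow>
       (\<exists>I. I \<subseteq> {1..N} \<and> card I = n \<and>
         (\<exists>d :: kappa \<Rightarrow> kappa \<Rightarrow> kappa \<Rightarrow> real.
            (\<forall>a b c. 0 \<le> d a b c \<and> d a b c \<le> 1) \<and>
            (\<forall>a b c. \<forall>i\<in>I. \<forall>j\<in>I. \<forall>k\<in>I. \<forall>l\<in>I. i < j \<and> j < k \<and> k < l \<longrightarrow>
               \<bar>real (card (kset V E g a i j k l \<inter> kset V E g1 b i j k l \<inter> kset V E g2 c i j k l))
                  / real (card (V j k)) - d a b c\<bar> \<le> \<epsilon>) \<and>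
            ((\<forall>i j k l. 1 \<le> i \<and> i < j \<and> j < k \<and> k < l \<and> l \<le> N \<longrightarrow>
                kset V E g KA i j k l \<inter> kset V E g KB i j k l = {} \<and>
                kset V E g1 KA i j k l \<inter> kset V E g1 KB i j k l = {} \<and>
                kset V E g2 KA i j k l \<inter> kset V E g2 KB i j k l = {})
             \<longrightarrow> (\<Sum>a\<in>Kappas. \<Sum>b\<in>Kappas. \<Sum>c\<in>Kappas. d a b c) \<le> 1 + 27 * \<epsilon>)))"
  proof (cases "n < 4")
    case True
    show ?thesis
      by (intro exI[of _ n] allI impI exI[of _ "{1..n}"] conjI exI[of _ "\<lambda>a b c. 0"])
        (use True \<open>\<epsilon> > 0\<close> in auto)
  next
    case False
    then show ?thesis using big_case[OF \<open>\<epsilon> > 0\<close>, of n] by simp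
  qed
qed

end
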